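(* Let $n$ be an odd positive integer and $(\lambda\mid\mu)$ a bipartition of $n$. Then \[\Gamma^B_{(\lambda\mid\mu)}=\begin{cases}2\,\Gamma^D_{(\lambda\mid\mu)} & \ell(\mu)\text{ even},\\ 0 & \ell(\mu)\text{ odd}.\end{cases}\] Consequently $s_n^B=2s_n^D$.
   Context: $B_n$ is the group of permutations $w$ of $\{\pm1,\dots,\pm n\}$ with $w(-i)=-w(i)$, and $D_n=\{w\in B_n:w(1)\cdots w(n)>0\}$. Each $w\in B_n$ decomposes uniquely into positive cycles $(a_1,\dots,a_\ell)(-a_1,\dots,-a_\ell)$ and negative cycles $(b_1,\dots,b_\ell,-b_1,\dots,-b_\ell)$; its cycle type is the bipartition $(\lambda\mid\mu)$ of positive and negative cycle lengths, and conjugacy classes of $B_n$ are indexed by bipartitions of $n$. An element lies in $D_n$ iff $\ell(\mu)$ (the number of parts of $\mu$) is even; for $n$ odd, the $B_n$-class of each such $(\lambda\mid\mu)$ is a single $D_n$-conjugacy class. $\Gamma^B_{(\lambda\mid\mu)}$ (resp. $\Gamma^D_{(\lambda\mid\mu)}$) is the sum of the column of the complex character table of $B_n$ (resp. $D_n$) at the class of cycle type $(\lambda\mid\mu)$; $s_n^B$, $s_n^D$ are the sums of all entries of the character tables of $B_n$, $D_n$. *)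

theory Defs
  imports "Jordan_Normal_Form.Matrix" "HOL-Combinatorics.Permutations"
begin

text \<open>Elements of B_n: permutations w of {+-1,...,+-n} with w(-i) = -w(i),
  extended by the identity outside (so they are bijections of int).
  The group law is composition.\<close>

definition signed_perms :: "nat \<Rightarrow> (int \<Rightarrow> int) set" where
  "signed_perms n = {w. w permutes ({- int n .. int n} - {0}) \<and> (\<forall>i. w (- i) = - w i)}"

definition even_signed_perms :: "nat \<Rightarrow> (int \<Rightarrow> int) set" where
  "even_signed_perms n = {w \<in> signed_perms n. (\<Prod>i\<in>{1 .. int n}. w i) > 0}"

definition orbit_of :: "(int \<Rightarrow> int) \<Rightarrow> int \<Rightarrow> int set" where
  "orbit_of w x = {(w ^^ k) x | k. True}"

text \<open>A negative cycle is a cycle (orbit) of w on {+-1,...,+-n} that is closed under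
  negation; the number of such cycles is the number of parts of mu.\<close>
definition num_neg_cycles :: "nat \<Rightarrow> (int \<Rightarrow> int) \<Rightarrow> nat" where
  "num_neg_cycles n w = card {orbit_of w x | x. x \<in> {- int n .. int n} - {0} \<and> - x \<in> orbit_of w x}"

definition mat_trace :: "complex mat \<Rightarrow> complex" where
  "mat_trace A = (\<Sum>i<dim_row A. A $$ (i, i))"

definition is_rep :: "(int \<Rightarrow> int) set \<Rightarrow> nat \<Rightarrow> ((int \<Rightarrow> int) \<Rightarrow> complex mat) \<Rightarrow> bool" where
  "is_rep G d \<rho> \<longleftrightarrow> (\<forall>g\<in>G. \<rho> g \<in> carrier_mat d d) \<and>
     (\<forall>g\<in>G. \<forall>h\<in>G. \<rho> (g \<circ> h) = \<rho> g * \<rho> h) \<and> \<rho> id = 1\<^sub>m d"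

definition inv_subspace :: "(int \<Rightarrow> int) set \<Rightarrow> nat \<Rightarrow> ((int \<Rightarrow> int) \<Rightarrow> complex mat) \<Rightarrow> complex vec set \<Rightarrow> bool" where
  "inv_subspace G d \<rho> W \<longleftrightarrow> W \<subseteq> carrier_vec d \<and> 0\<^sub>v d \<in> W \<and>
     (\<forall>u\<in>W. \<forall>v\<in>W. u + v \<in> W) \<and> (\<forall>c. \<forall>v\<in>W. c \<cdot>\<^sub>v v \<in> W) \<and>
     (\<forall>g\<in>G. \<forall>v\<in>W. \<rho> g *\<^sub>v v \<in> W)"

definition irreducible_rep :: "(int \<Rightarrow> int) set \<Rightarrow> nat \<Rightarrow> ((int \<Rightarrow> int) \<Rightarrow> complex mat) \<Rightarrow> bool" where
  "irreducible_rep G d \<rho> \<longleftrightarrow> d > 0 \<and> is_rep G d \<rho> \<and>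
     (\<forall>W. inv_subspace G d \<rho> W \<longrightarrow> W = {0\<^sub>v d} \<or> W = carrier_vec d)"

definition irr_chars :: "(int \<Rightarrow> int) set \<Rightarrow> ((int \<Rightarrow> int) \<Rightarrow> complex) set" where
  "irr_chars G = {(\<lambda>g. if g \<in> G then mat_trace (\<rho> g) else 0) | d \<rho>. irreducible_rep G d \<rho>}"

definition col_sum :: "(int \<Rightarrow> int) set \<Rightarrow> (int \<Rightarrow> int) \<Rightarrow> complex" where
  "col_sum G g = (\<Sum>\<chi>\<in>irr_chars G. \<chi> g)"

definition conj_classes :: "(int \<Rightarrow> int) set \<Rightarrow> (int \<Rightarrow> int) set set" where
  "conj_classes G = {{h \<circ> g \<circ> Hilbert_Choice.inv h | h. h \<in> G} | g. g \<in> G}"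

definition table_sum :: "(int \<Rightarrow> int) set \<Rightarrow> complex" where
  "table_sum G = (\<Sum>C\<in>conj_classes G. col_sum G (SOME g. g \<in> C))"

end

theory Submission
  imports Defs "HOL-Combinatorics.Cycles"
begin


lemma orb_self: "x \<in> orbit_of f x"
  unfolding orbit_of_def by (metis (mono_tags) CollectI funpow_0)

lemma orb_step: assumes "y \<in> orbit_of f x" shows "f y \<in> orbit_of f x"
proof -
  obtain k where "y = (f ^^ k) x" using assms unfolding orbit_of_def by blast
  then have "f y = (f ^^ Suc k) x" by simp
  then show ?thesis unfolding orbit_of_def by blast
qed

lemma orb_induct:
  assumes "P x" "\<And>y. P y \<Longrightarrow> P (f y)" "y \<in> orbit_of f x"
  shows "P y"
proof -
  obtain k where y: "y = (f ^^ k) x" using assms(3) unfolding orbit_of_def by blast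
  have "P ((f ^^ k) x)" by (induct k) (use assms(1,2) in auto)
  then show ?thesis using y by simp
qed

lemma orb_trans: assumes "y \<in> orbit_of f x" "z \<in> orbit_of f y" shows "z \<in> orbit_of f x"
proof -
  obtain k where k: "y = (f ^^ k) x" using assms(1) unfolding orbit_of_def by blast
  obtain j where j: "z = (f ^^ j) y" using assms(2) unfolding orbit_of_def by blast
  have "z = (f ^^ (j + k)) x" unfolding j k by (simp add: funpow_add)
  then show ?thesis unfolding orbit_of_def by blast
qed

lemma orb_sym:
  assumes p: "f permutes S" and fin: "finite S" and y: "y \<in> orbit_of f x"
  shows "x \<in> orbit_of f y"
proof -
  obtain k where yk: "y = (f ^^ k) x" using y unfolding orbit_of_def by blast
  have "permutation f" using p fin permutation_permutes by blast
  then obtain N where N: "f ^^ N = id" "N > 0" using permutation_is_nilpotent by blast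
  have "(f ^^ ((N - 1) * k)) y = (f ^^ ((N - 1) * k + k)) x" unfolding yk by (simp add: funpow_add)
  also have "(N - 1) * k + k = N * k" using N(2) by (cases N) auto
  also have "f ^^ (N * k) = id" by (metis N(1) funpow_mult id_funpow)
  then have "(f ^^ (N * k)) x = x" by simp
  finally show ?thesis unfolding orbit_of_def by blast
qed

lemma orb_eq:
  assumes p: "f permutes S" and fin: "finite S" and y: "y \<in> orbit_of f x"
  shows "orbit_of f y = orbit_of f x"
proof
  show "orbit_of f y \<subseteq> orbit_of f x" using orb_trans[OF y] by blast
  show "orbit_of f x \<subseteq> orbit_of f y" using orb_trans[OF orb_sym[OF p fin y]] by blast
qed

lemma orb_sub: assumes p: "f permutes S" and x: "x \<in> S" shows "orbit_of f x \<subseteq> S"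
proof
  fix y assume y: "y \<in> orbit_of f x"
  show "y \<in> S" by (rule orb_induct[where P="\<lambda>z. z \<in> S", OF x _ y]) (simp add: permutes_in_image[OF p])
qed

lemma orb_fix: assumes "f x = x" shows "orbit_of f x = {x}"
proof -
  have e: "(f ^^ k) x = x" for k by (induct k) (use assms in auto)
  have "orbit_of f x = {x | k::nat. True}" unfolding orbit_of_def e ..
  then show ?thesis by simp
qed

lemma orb_neg:
  assumes m: "\<And>i. f (- i) = - f i"
  shows "orbit_of f (- x) = uminus ` orbit_of f x"
proof -
  have e: "(f ^^ k) (- x) = - (f ^^ k) x" for k by (induct k) (use m in auto)
  show ?thesis unfolding orbit_of_def e by blast
qed

definition sc :: "int set \<Rightarrow> (int \<Rightarrow> int) \<Rightarrow> int \<Rightarrow> int" where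
  "sc M f x = (if x \<in> M then x else if f x \<in> M then f (f x) else f x)"

locale shortcut =
  fixes f :: "int \<Rightarrow> int" and S M :: "int set"
  assumes p: "f permutes S" and fin: "finite S" and MS: "M \<subseteq> S"
    and P1: "\<And>x. x \<notin> M \<Longrightarrow> f x \<in> M \<Longrightarrow> f (f x) \<notin> M"
    and P2: "\<And>x. x \<in> M \<Longrightarrow> f x \<in> M \<Longrightarrow> f (f x) \<in> M"
begin

lemma inj_f: "inj f" using p permutes_inj by blast

lemma sc_permutes: "sc M f permutes (S - M)"
proof (rule bij_imp_permutes)
  have into: "sc M f ` (S - M) \<subseteq> S - M"
  proof
    fix y assume "y \<in> sc M f ` (S - M)"
    then obtain x where x: "x \<in> S" "x \<notin> M" and y: "y = sc M f x" by blast
    have fx: "f x \<in> S" using x(1) by (simp add: permutes_in_image[OF p])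
    have ffx: "f (f x) \<in> S" using fx by (simp add: permutes_in_image[OF p])
    show "y \<in> S - M"
    proof (cases "f x \<in> M")
      case True
      then have "y = f (f x)" using y x(2) unfolding sc_def by simp
      then show ?thesis using ffx P1[OF x(2) True] by blast
    next
      case False
      then have "y = f x" using y x(2) unfolding sc_def by simp
      then show ?thesis using fx False by blast
    qed
  qed
  have inj: "inj_on (sc M f) (S - M)"
  proof (rule inj_onI)
    fix x y assume x: "x \<in> S - M" and y: "y \<in> S - M" and e: "sc M f x = sc M f y"
    show "x = y"
    proof (cases "f x \<in> M")
      case True
      show ?thesis
      proof (cases "f y \<in> M")
        case True
        then have "f (f x) = f (f y)" using e x y \<open>f x \<in> M\<close> unfolding sc_def by simp
        then show ?thesis using inj_f by (simp add: inj_eq)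
      next
        case False
        then have "f (f x) = f y" using e x y \<open>f x \<in> M\<close> unfolding sc_def by simp
        then have "f x = y" using inj_f by (simp add: inj_eq)
        then show ?thesis using \<open>f x \<in> M\<close> y by blast
      qed
    next
      case False
      show ?thesis
      proof (cases "f y \<in> M")
        case True
        then have "f x = f (f y)" using e x y False unfolding sc_def by simp
        then have "x = f y" using inj_f by (simp add: inj_eq)
        then show ?thesis using True x by blast
      next
        case False
        then have "f x = f y" using e x y \<open>f x \<notin> M\<close> unfolding sc_def by simp
        then show ?thesis using inj_f by (simp add: inj_eq)
      qed
    qed
  qed
  have "sc M f ` (S - M) = S - M" by (rule endo_inj_surj[OF _ into inj]) (use fin in simp)
  then show "bij_betw (sc M f) (S - M) (S - M)" using inj unfolding bij_betw_def by blast
next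
  fix x assume "x \<notin> S - M"
  then consider "x \<in> M" | "x \<notin> S" by blast
  then show "sc M f x = x"
  proof cases
    case 1 then show ?thesis unfolding sc_def by simp
  next
    case 2
    then have "f x = x" using p by (simp add: permutes_not_in)
    moreover have "x \<notin> M" using 2 MS by blast
    ultimately show ?thesis unfolding sc_def by simp
  qed
qed

lemma orbit_sc:
  assumes x: "x \<notin> M"
  shows "orbit_of (sc M f) x = orbit_of f x - M"
proof
  show "orbit_of (sc M f) x \<subseteq> orbit_of f x - M"
  proof
    fix y assume "y \<in> orbit_of (sc M f) x"
    then show "y \<in> orbit_of f x - M"
    proof (rule orb_induct[where P="\<lambda>y. y \<in> orbit_of f x - M", rotated 2])
      show "x \<in> orbit_of f x - M" using x orb_self by blast
      fix z assume z: "z \<in> orbit_of f x - M"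
      show "sc M f z \<in> orbit_of f x - M"
      proof (cases "f z \<in> M")
        case True
        then show ?thesis using z P1[of z] orb_step[of _ f x] unfolding sc_def by auto
      next
        case False
        then show ?thesis using z orb_step[of _ f x] unfolding sc_def by auto
      qed
    qed
  qed
  have "(f ^^ k) x \<notin> M \<longrightarrow> (f ^^ k) x \<in> orbit_of (sc M f) x" for k
  proof (induct k rule: less_induct)
    case (less k)
    show ?case
    proof (cases k)
      case 0 then show ?thesis using orb_self by simp
    next
      case (Suc j)
      show ?thesis
      proof
        assume yM: "(f ^^ k) x \<notin> M"
        have yk: "(f ^^ k) x = f ((f ^^ j) x)" using Suc by simp
        show "(f ^^ k) x \<in> orbit_of (sc M f) x"
        proof (cases "(f ^^ j) x \<in> M")
          case False
          then have "(f ^^ j) x \<in> orbit_of (sc M f) x" using less Suc by simp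
          moreover have "sc M f ((f ^^ j) x) = (f ^^ k) x" using False yM yk unfolding sc_def by simp
          ultimately show ?thesis using orb_step by metis
        next
          case True
          have "j \<noteq> 0"
          proof
            assume "j = 0" then show False using True x by simp
          qed
          then obtain i where ji: "j = Suc i" by (cases j) auto
          have y0: "(f ^^ j) x = f ((f ^^ i) x)" using ji by simp
          have y1M: "(f ^^ i) x \<notin> M"
          proof
            assume "(f ^^ i) x \<in> M"
            then have "f (f ((f ^^ i) x)) \<in> M" using P2 True y0 by simp
            then show False using yM yk y0 by simp
          qed
          then have "(f ^^ i) x \<in> orbit_of (sc M f) x" using less Suc ji by simp
          moreover have "sc M f ((f ^^ i) x) = (f ^^ k) x"
            using y1M True y0 yk unfolding sc_def by simp
          ultimately show ?thesis using orb_step by metis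
        qed
      qed
    qed
  qed
  then show "orbit_of f x - M \<subseteq> orbit_of (sc M f) x"
    unfolding orbit_of_def by blast
qed

end


abbreviation SS :: "nat \<Rightarrow> int set" where "SS n \<equiv> {- int n .. int n} - {0}"

definition zz :: "nat \<Rightarrow> int \<Rightarrow> int" where "zz n i = (if i \<in> SS n then - i else i)"

definition PP :: "nat \<Rightarrow> (int \<Rightarrow> int) \<Rightarrow> int" where "PP n g = (\<Prod>i\<in>{1 .. int n}. g i)"

lemma sp_mem: "w \<in> signed_perms n \<longleftrightarrow> w permutes SS n \<and> (\<forall>i. w (- i) = - w i)"
  by (simp add: signed_perms_def)

lemma sp_perm: "w \<in> signed_perms n \<Longrightarrow> w permutes SS n"
  unfolding sp_mem by blast

lemma sp_neg: "w \<in> signed_perms n \<Longrightarrow> w (- i) = - w i"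
  unfolding sp_mem by blast

lemma sp_intro: "w permutes SS n \<Longrightarrow> (\<And>i. w (- i) = - w i) \<Longrightarrow> w \<in> signed_perms n"
  unfolding sp_mem by blast

lemma esp_mem: "w \<in> even_signed_perms n \<longleftrightarrow> w \<in> signed_perms n \<and> PP n w > 0"
  by (simp add: even_signed_perms_def PP_def)

lemma sp_id: "id \<in> signed_perms n"
  by (rule sp_intro) (auto simp: permutes_id)

lemma sp_comp: assumes "g \<in> signed_perms n" "h \<in> signed_perms n" shows "g \<circ> h \<in> signed_perms n"
proof -
  have "g permutes SS n" "h permutes SS n" "\<And>i. g (- i) = - g i" "\<And>i. h (- i) = - h i"
    using assms unfolding sp_mem by blast+
  then have "g \<circ> h permutes SS n" "\<forall>i. (g \<circ> h) (- i) = - (g \<circ> h) i"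
    using permutes_compose[of h "SS n" g] by auto
  then show ?thesis unfolding sp_mem by blast
qed

lemma sp_inv: assumes "h \<in> signed_perms n" shows "Hilbert_Choice.inv h \<in> signed_perms n"
proof -
  have p: "h permutes SS n" and m: "\<And>i. h (- i) = - h i" using sp_perm[OF assms] sp_neg[OF assms] by auto
  have "Hilbert_Choice.inv h (- i) = - Hilbert_Choice.inv h i" for i
  proof -
    have "h (- Hilbert_Choice.inv h i) = - h (Hilbert_Choice.inv h i)" by (rule m)
    also have "\<dots> = - i" by (simp only: permutes_inverses(1)[OF p])
    finally have "Hilbert_Choice.inv h (h (- Hilbert_Choice.inv h i)) = Hilbert_Choice.inv h (- i)" by simp
    thus ?thesis by (simp only: permutes_inverses(2)[OF p])
  qed
  thus ?thesis using permutes_inv[OF p] by (intro sp_intro) auto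
qed

lemma sp_in: "w \<in> signed_perms n \<Longrightarrow> i \<in> SS n \<Longrightarrow> w i \<in> SS n"
  using permutes_in_image[OF sp_perm] by blast

lemma sp_nz: assumes "w \<in> signed_perms n" "i \<in> {1..int n}" shows "w i \<noteq> 0"
proof -
  have "i \<in> SS n" using assms(2) by simp
  then have "w i \<in> SS n" by (rule sp_in[OF assms(1)])
  then show ?thesis by blast
qed

lemma zz_sp: "zz n \<in> signed_perms n"
proof -
  have "zz n permutes SS n"
  proof (rule bij_imp_permutes)
    show "bij_betw (zz n) (SS n) (SS n)"
      by (rule bij_betw_byWitness[where f'="zz n"]) (auto simp: zz_def)
  qed (auto simp: zz_def)
  moreover have "zz n (- i) = - zz n i" for i by (auto simp: zz_def)
  ultimately show ?thesis by (intro sp_intro) auto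
qed

lemma zz_zz: "zz n \<circ> zz n = id"
  by (auto simp: zz_def fun_eq_iff)

lemma zz_comm: assumes "g \<in> signed_perms n" shows "zz n \<circ> g = g \<circ> zz n"
proof
  fix i
  have p: "g permutes SS n" and m: "\<And>i. g (- i) = - g i" using sp_perm[OF assms] sp_neg[OF assms] by auto
  show "(zz n \<circ> g) i = (g \<circ> zz n) i"
  proof (cases "i \<in> SS n")
    case True
    then show ?thesis using sp_in[OF assms True] m by (simp add: zz_def)
  next
    case False
    then have "g i = i" using p by (simp add: permutes_def)
    then show ?thesis unfolding zz_def o_def by (simp only: False \<open>g i = i\<close> if_False)
  qed
qed

lemma inv_zz: "Hilbert_Choice.inv (zz n) = zz n"
  using zz_zz by (metis inv_unique_comp)

lemma PP_nz: "g \<in> signed_perms n \<Longrightarrow> PP n g \<noteq> 0"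
  unfolding PP_def using sp_nz by (simp add: prod_zero_iff)

lemma abs_bij: assumes "h \<in> signed_perms n"
  shows "bij_betw (\<lambda>i. \<bar>h i\<bar>) {1 .. int n} {1 .. int n}"
proof -
  have p: "h permutes SS n" and m: "\<And>i. h (- i) = - h i" using sp_perm[OF assms] sp_neg[OF assms] by auto
  have inj: "inj h" using p permutes_inj by blast
  have io: "inj_on (\<lambda>i. \<bar>h i\<bar>) {1 .. int n}"
  proof (rule inj_onI)
    fix i j assume i: "i \<in> {1 .. int n}" and j: "j \<in> {1 .. int n}" and e: "\<bar>h i\<bar> = \<bar>h j\<bar>"
    then have "h i = h j \<or> h i = - h j" by arith
    then have "h i = h j \<or> h i = h (- j)" using m by simp
    then have "i = j \<or> i = - j" using inj by (auto dest: injD)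
    then show "i = j" using i j by auto
  qed
  have sub: "(\<lambda>i. \<bar>h i\<bar>) ` {1 .. int n} \<subseteq> {1 .. int n}"
  proof
    fix y assume "y \<in> (\<lambda>i. \<bar>h i\<bar>) ` {1 .. int n}"
    then obtain i where i: "i \<in> {1 .. int n}" "y = \<bar>h i\<bar>" by auto
    have "i \<in> SS n" using i by auto
    then have "h i \<in> SS n" using sp_in[OF assms] by blast
    then show "y \<in> {1 .. int n}" using i by auto
  qed
  have "(\<lambda>i. \<bar>h i\<bar>) ` {1 .. int n} = {1 .. int n}"
    by (rule endo_inj_surj[OF _ sub io]) simp
  then show ?thesis using io unfolding bij_betw_def by blast
qed

lemma PP_comp:
  assumes g: "g \<in> signed_perms n" and h: "h \<in> signed_perms n"
  shows "PP n (g \<circ> h) * (\<Prod>i\<in>{1 .. int n}. i) = PP n g * PP n h"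
proof -
  have mg: "\<And>i. g (- i) = - g i" using sp_neg[OF g] by auto
  let ?s = "\<Prod>i\<in>{1 .. int n}. sgn (h i)"
  have e1: "g (h i) = sgn (h i) * g \<bar>h i\<bar>" if "i \<in> {1 .. int n}" for i
    using sp_nz[OF h that] mg[of "\<bar>h i\<bar>"] by (auto simp: sgn_if abs_if)
  have "PP n (g \<circ> h) = (\<Prod>i\<in>{1 .. int n}. sgn (h i) * g \<bar>h i\<bar>)"
    unfolding PP_def using e1 by (intro prod.cong) auto
  also have "\<dots> = ?s * (\<Prod>i\<in>{1 .. int n}. g \<bar>h i\<bar>)" by (simp add: prod.distrib)
  also have "(\<Prod>i\<in>{1 .. int n}. g \<bar>h i\<bar>) = PP n g"
    unfolding PP_def using prod.reindex_bij_betw[OF abs_bij[OF h], of g] by simp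
  finally have a: "PP n (g \<circ> h) = ?s * PP n g" .
  have "PP n h = (\<Prod>i\<in>{1 .. int n}. sgn (h i) * \<bar>h i\<bar>)"
    unfolding PP_def by (intro prod.cong) (auto simp: sgn_mult_abs)
  also have "\<dots> = ?s * (\<Prod>i\<in>{1 .. int n}. \<bar>h i\<bar>)" by (simp add: prod.distrib)
  also have "(\<Prod>i\<in>{1 .. int n}. \<bar>h i\<bar>) = (\<Prod>i\<in>{1 .. int n}. i)"
    using prod.reindex_bij_betw[OF abs_bij[OF h], of id] by simp
  finally have b: "PP n h = ?s * (\<Prod>i\<in>{1 .. int n}. i)" .
  show ?thesis using a b by (simp add: ac_simps)
qed

lemma prod_pos: "(\<Prod>i\<in>{1 .. int n}. i) > 0"
  by (rule prod_pos) auto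

lemma comp_esp_iff:
  assumes g: "g \<in> signed_perms n" and h: "h \<in> signed_perms n"
  shows "g \<circ> h \<in> even_signed_perms n \<longleftrightarrow> (g \<in> even_signed_perms n \<longleftrightarrow> h \<in> even_signed_perms n)"
proof -
  have "PP n (g \<circ> h) > 0 \<longleftrightarrow> PP n (g \<circ> h) * (\<Prod>i\<in>{1 .. int n}. i) > 0"
    using prod_pos[of n] by (simp add: zero_less_mult_iff)
  also have "\<dots> \<longleftrightarrow> PP n g * PP n h > 0" by (simp add: PP_comp[OF g h])
  also have "\<dots> \<longleftrightarrow> (PP n g > 0 \<longleftrightarrow> PP n h > 0)"
    using PP_nz[OF g] PP_nz[OF h] by (auto simp: zero_less_mult_iff)
  finally show ?thesis using g h sp_comp[OF g h] by (simp add: esp_mem)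
qed

lemma zz_not_esp: assumes "odd n" shows "zz n \<notin> even_signed_perms n"
proof -
  have "PP n (zz n) = (\<Prod>i\<in>{1 .. int n}. - i)"
    unfolding PP_def by (intro prod.cong) (auto simp: zz_def)
  also have "\<dots> = (-1) ^ card {1 .. int n} * (\<Prod>i\<in>{1 .. int n}. i)"
    by (rule prod_uminus)
  also have "\<dots> = - (\<Prod>i\<in>{1 .. int n}. i)" using assms by simp
  finally show ?thesis using prod_pos[of n] by (simp add: esp_mem)
qed

lemma esp_sub: "even_signed_perms n \<subseteq> signed_perms n" by (auto simp: esp_mem)

lemma not_esp_comp_zz:
  assumes "odd n" "g \<in> signed_perms n"
  shows "g \<circ> zz n \<in> even_signed_perms n \<longleftrightarrow> g \<notin> even_signed_perms n"
  using comp_esp_iff[OF assms(2) zz_sp] zz_not_esp[OF assms(1)] by blast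


lemma SS_Suc: "SS (Suc n) - {int n + 1, - (int n + 1)} = SS n"
  by auto

lemma SS_fin: "finite (SS n)" by simp

lemma num_neg_def': "num_neg_cycles n w = card {orbit_of w x | x. x \<in> SS n \<and> - x \<in> orbit_of w x}"
  unfolding num_neg_cycles_def ..

context
  fixes n :: nat and w :: "int \<Rightarrow> int" and m :: int and M :: "int set"
  assumes w: "w \<in> signed_perms (Suc n)"
  defines "m \<equiv> int n + 1" and "M \<equiv> {m, - m}"
begin

lemma mpos: "m > 0" unfolding m_def by simp

lemma wneg: "w (- i) = - w i" using sp_neg[OF w] .

lemma winj: "w x = w y \<longleftrightarrow> x = y" using permutes_inj[OF sp_perm[OF w]] by (simp add: inj_eq)

lemma MS: "M \<subseteq> SS (Suc n)" unfolding M_def m_def by auto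

lemma P1: assumes x: "x \<notin> M" and wx: "w x \<in> M" shows "w (w x) \<notin> M"
proof
  assume a: "w (w x) \<in> M"
  have "w x = m \<or> w x = - m" using wx unfolding M_def by blast
  moreover have "w (w x) = m \<or> w (w x) = - m" using a unfolding M_def by blast
  ultimately have "w x = w (w x) \<or> w x = - w (w x)" using mpos by auto
  then have "w x = w (w x) \<or> w x = w (- w x)" using wneg by simp
  then have "x = w x \<or> x = - w x" using winj by blast
  then show False using x wx unfolding M_def by auto
qed

lemma P2: assumes x: "x \<in> M" and wx: "w x \<in> M" shows "w (w x) \<in> M"
proof -
  have "w x = x \<or> w x = - x" using x wx unfolding M_def by auto
  then show ?thesis
  proof
    assume "w x = x" then show ?thesis using x by simp
  next
    assume e: "w x = - x"
    then have "w (w x) = x" using wneg[of x] by simp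
    then show ?thesis using x by simp
  qed
qed

interpretation sh: shortcut w "SS (Suc n)" M
  by unfold_locales (use sp_perm[OF w] MS P1 P2 in auto)

lemma q_sp: "sc M w \<in> signed_perms n"
proof (rule sp_intro)
  have "SS (Suc n) - M = SS n" unfolding M_def m_def by (rule SS_Suc)
  then show "sc M w permutes SS n" using sh.sc_permutes by metis
next
  fix i
  have Mneg: "- y \<in> M \<longleftrightarrow> y \<in> M" for y unfolding M_def by auto
  show "sc M w (- i) = - sc M w i"
    unfolding sc_def using wneg Mneg[of i] Mneg[of "w i"] by simp
qed


lemma orbw_eq: "y \<in> orbit_of w x \<Longrightarrow> orbit_of w y = orbit_of w x"
  using orb_eq[OF sp_perm[OF w] SS_fin] by blast

lemma orbw_neg: "orbit_of w (- x) = uminus ` orbit_of w x"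
  using orb_neg[of w] wneg by blast

lemma orbw_sub: "x \<in> SS (Suc n) \<Longrightarrow> orbit_of w x \<subseteq> SS (Suc n)"
  using orb_sub[OF sp_perm[OF w]] by blast

definition NW where "NW = {orbit_of w x | x. x \<in> SS (Suc n) \<and> - x \<in> orbit_of w x}"
definition NQ where "NQ = {orbit_of (sc M w) x | x. x \<in> SS n \<and> - x \<in> orbit_of (sc M w) x}"

lemma NW_closed: assumes X: "X \<in> NW" and y: "y \<in> X" shows "- y \<in> X"
proof -
  obtain x where X: "X = orbit_of w x" and x: "- x \<in> orbit_of w x" using X unfolding NW_def by blast
  have "orbit_of w (- x) = X" using orbw_eq[OF x] X by simp
  then have "uminus ` X = X" using orbw_neg X by simp
  then show ?thesis using y by blast
qed

lemma NW_nonM: assumes X: "X \<in> NW" and OM: "X \<noteq> M" shows "\<exists>y\<in>X. y \<notin> M"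
proof (rule ccontr)
  assume "\<not> (\<exists>y\<in>X. y \<notin> M)"
  then have sub: "X \<subseteq> M" by blast
  obtain x where Ox: "X = orbit_of w x" using X unfolding NW_def by blast
  have xO: "x \<in> X" using Ox orb_self by simp
  have nxO: "- x \<in> X" using NW_closed[OF X xO] .
  have "x = m \<or> x = - m" using xO sub unfolding M_def by blast
  then have "M \<subseteq> X" using xO nxO unfolding M_def by auto
  then show False using sub OM by blast
qed

lemma NQ_eq: "NQ = (\<lambda>X. X - M) ` (NW - {M})"
proof (intro equalityI subsetI)
  fix P assume "P \<in> NQ"
  then obtain y where P: "P = orbit_of (sc M w) y" and y: "y \<in> SS n" and ny: "- y \<in> orbit_of (sc M w) y"
    unfolding NQ_def by blast
  have yM: "y \<notin> M" using y unfolding M_def m_def by auto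
  have Pe: "P = orbit_of w y - M" using sh.orbit_sc[OF yM] P by simp
  have yS: "y \<in> SS (Suc n)" using y by auto
  have "orbit_of w y \<in> NW" unfolding NW_def using yS ny Pe P by blast
  moreover have "orbit_of w y \<noteq> M" using orb_self[of y w] yM by blast
  ultimately show "P \<in> (\<lambda>X. X - M) ` (NW - {M})" using Pe by blast
next
  fix P assume "P \<in> (\<lambda>X. X - M) ` (NW - {M})"
  then obtain X where P: "P = X - M" and X: "X \<in> NW" and OM: "X \<noteq> M" by blast
  obtain y where yO: "y \<in> X" and yM: "y \<notin> M" using NW_nonM[OF X OM] by blast
  obtain x where Ox: "X = orbit_of w x" and x: "x \<in> SS (Suc n)" using X unfolding NW_def by blast
  have yS: "y \<in> SS (Suc n)" using orbw_sub[OF x] yO Ox by blast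
  have y: "y \<in> SS n" using yS yM SS_Suc[of n] unfolding M_def m_def by blast
  have Oy: "orbit_of w y = X" using orbw_eq yO Ox by simp
  have nyO: "- y \<in> X" using NW_closed[OF X yO] .
  have nyM: "- y \<notin> M" using yM unfolding M_def by auto
  have Pq: "orbit_of (sc M w) y = P" using sh.orbit_sc[OF yM] Oy P by simp
  have "- y \<in> orbit_of (sc M w) y" using Pq P nyO nyM by blast
  then show "P \<in> NQ" unfolding NQ_def using y Pq by blast
qed

lemma NW_inj: "inj_on (\<lambda>X. X - M) (NW - {M})"
proof (rule inj_onI)
  fix X1 X2 assume X1: "X1 \<in> NW - {M}" and X2: "X2 \<in> NW - {M}" and e: "X1 - M = X2 - M"
  obtain y where yO: "y \<in> X1" and yM: "y \<notin> M" using NW_nonM X1 by blast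
  have y2: "y \<in> X2" using e yO yM by blast
  obtain x1 where x1: "X1 = orbit_of w x1" using X1 unfolding NW_def by blast
  obtain x2 where x2: "X2 = orbit_of w x2" using X2 unfolding NW_def by blast
  have "orbit_of w y = X1" using orbw_eq yO x1 by simp
  moreover have "orbit_of w y = X2" using orbw_eq y2 x2 by simp
  ultimately show "X1 = X2" by simp
qed

lemma NW_fin: "finite NW"
proof (rule finite_subset)
  show "NW \<subseteq> Pow (SS (Suc n))" unfolding NW_def using orbw_sub by blast
qed simp

lemma M_in_NW: "M \<in> NW \<longleftrightarrow> w m = - m"
proof
  assume "w m = - m"
  then have wm: "w m = - m" and wnm: "w (- m) = m" using wneg[of m] by auto
  have "orbit_of w m \<subseteq> M"
  proof
    fix y assume "y \<in> orbit_of w m"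
    then show "y \<in> M"
      by (rule orb_induct[where P="\<lambda>z. z \<in> M", rotated 2]) (use wm wnm in \<open>auto simp: M_def\<close>)
  qed
  moreover have "m \<in> orbit_of w m" by (rule orb_self)
  moreover have "- m \<in> orbit_of w m" using orb_step[OF orb_self, of w m] wm by simp
  ultimately have "orbit_of w m = M" unfolding M_def by blast
  moreover have "m \<in> SS (Suc n)" unfolding m_def by simp
  ultimately show "M \<in> NW" unfolding NW_def using \<open>- m \<in> orbit_of w m\<close> by blast
next
  assume "M \<in> NW"
  then obtain x where Mx: "M = orbit_of w x" unfolding NW_def by blast
  have xM: "x \<in> M" using Mx orb_self by simp
  have wxM: "w x \<in> M" using Mx orb_step[OF orb_self] by simp
  have "w x = x \<or> w x = - x" using xM wxM unfolding M_def by auto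
  moreover have "w x \<noteq> x"
  proof
    assume "w x = x"
    then have "M = {x}" using Mx orb_fix by simp
    then show False unfolding M_def using mpos by (metis insert_iff neg_equal_zero singletonD less_irrefl)
  qed
  ultimately have wx: "w x = - x" by simp
  show "w m = - m"
  proof (cases "x = m")
    case True then show ?thesis using wx by simp
  next
    case False
    then have "x = - m" using xM unfolding M_def by blast
    then show ?thesis using wx wneg[of m] by simp
  qed
qed

lemma num_step: "num_neg_cycles (Suc n) w = num_neg_cycles n (sc M w) + (if w m = - m then 1 else 0)"
proof -
  have a: "num_neg_cycles (Suc n) w = card NW" unfolding num_neg_def' NW_def ..
  have b: "num_neg_cycles n (sc M w) = card (NW - {M})"
    unfolding num_neg_def' NQ_def[symmetric] NQ_eq using card_image[OF NW_inj] .
  show ?thesis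
  proof (cases "M \<in> NW")
    case True
    then have "card NW = card (NW - {M}) + 1"
      using NW_fin card_Diff_singleton[OF True] card_gt_0_iff[of NW] by fastforce
    then show ?thesis using a b True M_in_NW by simp
  next
    case False
    then show ?thesis using a b M_in_NW by simp
  qed
qed


lemma PP_step: "PP (Suc n) w > 0 \<longleftrightarrow> (PP n (sc M w) > 0 \<longleftrightarrow> w m \<noteq> - m)"
proof -
  have ins: "{1 .. int (Suc n)} = insert m {1 .. int n}" unfolding m_def by auto
  have mn: "m \<notin> {1 .. int n}" unfolding m_def by simp
  have P1: "PP (Suc n) w = w m * (\<Prod>i\<in>{1 .. int n}. w i)"
    unfolding PP_def ins using mn by simp
  have iM: "i \<notin> M" if "i \<in> {1 .. int n}" for i using that unfolding M_def m_def by auto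
  have nz: "PP n (sc M w) \<noteq> 0" using PP_nz[OF q_sp] .
  show ?thesis
  proof (cases "w m \<in> M")
    case True
    have wiM: "w i \<notin> M" if i: "i \<in> {1 .. int n}" for i
    proof
      assume wi: "w i \<in> M"
      have "w i = w m \<or> w i = - w m" using wi True unfolding M_def by auto
      then have "w i = w m \<or> w i = w (- m)" using wneg by simp
      then have "i = m \<or> i = - m" using winj by blast
      then show False using iM[OF i] unfolding M_def by blast
    qed
    have "PP n (sc M w) = (\<Prod>i\<in>{1 .. int n}. w i)"
      unfolding PP_def by (rule prod.cong) (use iM wiM in \<open>auto simp: sc_def\<close>)
    then have e: "PP (Suc n) w = w m * PP n (sc M w)" using P1 by simp
    have "w m = m \<or> w m = - m" using True unfolding M_def by blast
    then show ?thesis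
    proof
      assume "w m = m" then show ?thesis using e mpos nz by (simp add: zero_less_mult_iff)
    next
      assume wm: "w m = - m"
      then show ?thesis using e mpos nz by (auto simp: zero_less_mult_iff mult_less_0_iff)
    qed
  next
    case False
    define a0 where "a0 = Hilbert_Choice.inv w m"
    have wa0: "w a0 = m" unfolding a0_def using permutes_inverses(1)[OF sp_perm[OF w]] .
    have a0S: "a0 \<in> SS (Suc n)"
    proof (rule ccontr)
      assume "a0 \<notin> SS (Suc n)"
      then have "w a0 = a0" using permutes_not_in[OF sp_perm[OF w]] by blast
      then have "a0 = m" using wa0 by simp
      then show False using \<open>a0 \<notin> SS (Suc n)\<close> unfolding m_def by simp
    qed
    have a0m: "a0 \<noteq> m" using wa0 False unfolding M_def by auto
    have a0nm: "a0 \<noteq> - m" using wa0 False wneg[of m] unfolding M_def by auto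
    define a where "a = \<bar>a0\<bar>"
    have a: "a \<in> {1 .. int n}" using a0S a0m a0nm unfolding a_def m_def by auto
    have waM: "w a = m \<or> w a = - m"
    proof (cases "a0 > 0")
      case True then show ?thesis using wa0 unfolding a_def by simp
    next
      case False
      then have "a = - a0" unfolding a_def by simp
      then show ?thesis using wa0 wneg[of a0] by simp
    qed
    have wiM: "w i \<notin> M" if i: "i \<in> {1 .. int n} - {a}" for i
    proof
      assume wi: "w i \<in> M"
      have "w i = w a \<or> w i = - w a" using wi waM unfolding M_def by auto
      then have "w i = w a \<or> w i = w (- a)" using wneg by simp
      then have "i = a \<or> i = - a" using winj by blast
      then show False using i a by auto
    qed
    define R where "R = (\<Prod>i\<in>{1 .. int n} - {a}. w i)"
    have R1: "(\<Prod>i\<in>{1 .. int n}. w i) = w a * R" unfolding R_def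
      by (rule prod.remove) (use a in auto)
    have "PP n (sc M w) = sc M w a * (\<Prod>i\<in>{1 .. int n} - {a}. sc M w i)"
      unfolding PP_def by (rule prod.remove) (use a in auto)
    also have "(\<Prod>i\<in>{1 .. int n} - {a}. sc M w i) = R" unfolding R_def
      by (rule prod.cong) (use iM wiM in \<open>auto simp: sc_def\<close>)
    also have "sc M w a = w (w a)" using iM[OF a] waM unfolding sc_def M_def by auto
    finally have Q: "PP n (sc M w) = w (w a) * R" .
    have key: "w m * w a = m * w (w a)"
      using waM wneg[of m] by auto
    have "PP (Suc n) w = m * PP n (sc M w)" using P1 R1 Q key
      by (metis mult.assoc)
    moreover have "w m \<noteq> - m" using False unfolding M_def by blast
    ultimately show ?thesis using mpos nz by (simp add: zero_less_mult_iff)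
  qed
qed

end


lemma neg_par: "w \<in> signed_perms n \<Longrightarrow> (PP n w > 0 \<longleftrightarrow> even (num_neg_cycles n w))"
proof (induct n arbitrary: w)
  case 0
  have "SS 0 = {}" by auto
  then have "w = id" using sp_perm[OF 0] by (simp add: permutes_empty)
  have "{orbit_of w x | x. x \<in> SS 0 \<and> - x \<in> orbit_of w x} = {}" by auto
  then have "num_neg_cycles 0 w = 0" unfolding num_neg_def' by simp
  moreover have "PP 0 w = 1" unfolding PP_def by simp
  ultimately show ?case by simp
next
  case (Suc n)
  let ?q = "sc {int n + 1, - (int n + 1)} w"
  have q: "?q \<in> signed_perms n" by (rule q_sp[OF Suc.prems])
  have IH: "PP n ?q > 0 \<longleftrightarrow> even (num_neg_cycles n ?q)" using Suc.hyps[OF q] .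
  show ?case using num_step[OF Suc.prems] PP_step[OF Suc.prems] IH by auto
qed


lemma scalar_mat_by_vec:
  fixes A :: "complex mat"
  assumes A: "A \<in> carrier_mat d d" and h: "\<And>v. v \<in> carrier_vec d \<Longrightarrow> A *\<^sub>v v = c \<cdot>\<^sub>v v"
  shows "A = c \<cdot>\<^sub>m 1\<^sub>m d"
proof (rule eq_matI)
  fix i j assume ij: "i < dim_row (c \<cdot>\<^sub>m 1\<^sub>m d)" "j < dim_col (c \<cdot>\<^sub>m 1\<^sub>m d)"
  then have i: "i < d" and j: "j < d" by auto
  have "(A *\<^sub>v unit_vec d j) $ i = (c \<cdot>\<^sub>v unit_vec d j) $ i" using h by simp
  then show "A $$ (i, j) = (c \<cdot>\<^sub>m 1\<^sub>m d) $$ (i, j)" using A i j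
    by (simp add: mult_mat_vec_def row_def scalar_prod_right_unit)
qed (use A in auto)

lemma rep_hom: "is_rep G d r \<Longrightarrow> g \<in> G \<Longrightarrow> h \<in> G \<Longrightarrow> r (g \<circ> h) = r g * r h"
  unfolding is_rep_def by blast
lemma rep_car: "is_rep G d r \<Longrightarrow> g \<in> G \<Longrightarrow> r g \<in> carrier_mat d d"
  unfolding is_rep_def by blast
lemma rep_id: "is_rep G d r \<Longrightarrow> r id = 1\<^sub>m d"
  unfolding is_rep_def by blast

lemma schur_z:
  assumes odd: "odd n" and irr: "irreducible_rep (signed_perms n) d r"
  shows "\<exists>e::complex. (e = 1 \<or> e = -1) \<and> r (zz n) = e \<cdot>\<^sub>m 1\<^sub>m d"
proof -
  let ?B = "signed_perms n"
  have rep: "is_rep ?B d r" using irr unfolding irreducible_rep_def by blast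
  define A where "A = r (zz n)"
  have A: "A \<in> carrier_mat d d" unfolding A_def using rep_car[OF rep zz_sp] .
  have AA: "A * A = 1\<^sub>m d" unfolding A_def
    using rep_hom[OF rep zz_sp zz_sp] rep_id[OF rep] zz_zz by metis
  have comm: "A * r g = r g * A" if g: "g \<in> ?B" for g
    unfolding A_def using rep_hom[OF rep zz_sp g] rep_hom[OF rep g zz_sp] zz_comm[OF g] by metis
  define W where "W = {v \<in> carrier_vec d. A *\<^sub>v v = v}"
  have "inv_subspace ?B d r W"
    unfolding inv_subspace_def
  proof (intro conjI ballI allI)
    show "W \<subseteq> carrier_vec d" unfolding W_def by blast
    show "0\<^sub>v d \<in> W" unfolding W_def using A by (auto intro!: eq_vecI)
    fix u v assume u: "u \<in> W" and v: "v \<in> W"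
    then show "u + v \<in> W" unfolding W_def using A by (simp add: mult_add_distrib_mat_vec)
  next
    fix c v assume v: "v \<in> W"
    then show "c \<cdot>\<^sub>v v \<in> W" unfolding W_def using A by (simp add: mult_mat_vec)
  next
    fix g v assume g: "g \<in> ?B" and v: "v \<in> W"
    have rg: "r g \<in> carrier_mat d d" using rep_car[OF rep g] .
    have vc: "v \<in> carrier_vec d" using v unfolding W_def by blast
    have "A *\<^sub>v (r g *\<^sub>v v) = (A * r g) *\<^sub>v v" using A rg vc by simp
    also have "\<dots> = (r g * A) *\<^sub>v v" using comm[OF g] by simp
    also have "\<dots> = r g *\<^sub>v (A *\<^sub>v v)" using A rg vc by simp
    also have "\<dots> = r g *\<^sub>v v" using v unfolding W_def by simp
    finally show "r g *\<^sub>v v \<in> W" unfolding W_def using rg vc by simp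
  qed
  then have "W = {0\<^sub>v d} \<or> W = carrier_vec d" using irr unfolding irreducible_rep_def by blast
  then show ?thesis
  proof
    assume W0: "W = {0\<^sub>v d}"
    have "A *\<^sub>v v = (-1) \<cdot>\<^sub>v v" if vc: "v \<in> carrier_vec d" for v
    proof -
      define u where "u = A *\<^sub>v v + v"
      have Av: "A *\<^sub>v v \<in> carrier_vec d" using A vc by simp
      have "A *\<^sub>v u = A *\<^sub>v (A *\<^sub>v v) + A *\<^sub>v v"
        unfolding u_def using A vc Av by (simp add: mult_add_distrib_mat_vec)
      also have "A *\<^sub>v (A *\<^sub>v v) = v" using A vc AA
        by (metis assoc_mult_mat_vec one_mult_mat_vec)
      finally have "A *\<^sub>v u = u" unfolding u_def using vc Av by (simp add: comm_add_vec)
      then have "u \<in> W" unfolding W_def u_def using vc Av by simp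
      then have "u = 0\<^sub>v d" using W0 by blast
      then have z: "(A *\<^sub>v v + v) $ i = 0" if "i < d" for i
        unfolding u_def using that by simp
      show ?thesis
      proof (rule eq_vecI)
        fix i assume "i < dim_vec ((-1) \<cdot>\<^sub>v v)"
        then have i: "i < d" using vc by simp
        show "(A *\<^sub>v v) $ i = ((-1) \<cdot>\<^sub>v v) $ i" using z[OF i] i vc Av
          by (simp add: add_eq_0_iff2)
      qed (use vc Av A in simp)
    qed
    then have "A = (-1) \<cdot>\<^sub>m 1\<^sub>m d" by (rule scalar_mat_by_vec[OF A])
    then show ?thesis unfolding A_def by blast
  next
    assume "W = carrier_vec d"
    then have "A *\<^sub>v v = 1 \<cdot>\<^sub>v v" if vc: "v \<in> carrier_vec d" for v
      using vc unfolding W_def by auto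
    then have "A = 1 \<cdot>\<^sub>m 1\<^sub>m d" by (rule scalar_mat_by_vec[OF A])
    then show ?thesis unfolding A_def by blast
  qed
qed


lemma smult_mat_vec:
  assumes "M \<in> carrier_mat a b" "v \<in> carrier_vec b"
  shows "(e \<cdot>\<^sub>m M) *\<^sub>v v = (e::complex) \<cdot>\<^sub>v (M *\<^sub>v v)"
  using assms by (intro eq_vecI) (auto simp: row_def scalar_prod_def sum_distrib_left ac_simps)

lemma smult_smult_mat: "(a::complex) \<cdot>\<^sub>m (b \<cdot>\<^sub>m A) = (a * b) \<cdot>\<^sub>m A"
  by (intro eq_matI) auto

lemma one_smult_mat: "(1::complex) \<cdot>\<^sub>m A = A"
  by (intro eq_matI) auto

lemma smult_mult_smult:
  assumes "X \<in> carrier_mat a b" "Y \<in> carrier_mat b c"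
  shows "(e \<cdot>\<^sub>m X) * (f \<cdot>\<^sub>m Y) = ((e::complex) * f) \<cdot>\<^sub>m (X * Y)"
proof -
  have "(e \<cdot>\<^sub>m X) * (f \<cdot>\<^sub>m Y) = e \<cdot>\<^sub>m (X * (f \<cdot>\<^sub>m Y))"
    by (rule mult_smult_assoc_mat[OF assms(1) smult_carrier_mat[OF assms(2)]])
  also have "X * (f \<cdot>\<^sub>m Y) = f \<cdot>\<^sub>m (X * Y)" by (rule mult_smult_distrib[OF assms])
  finally show ?thesis by (simp add: smult_smult_mat)
qed

lemma tr_smult: "M \<in> carrier_mat d d \<Longrightarrow> mat_trace (e \<cdot>\<^sub>m M) = e * mat_trace M"
  unfolding mat_trace_def by (simp add: sum_distrib_left)

lemma tr_one: "mat_trace (1\<^sub>m d) = of_nat d"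
  unfolding mat_trace_def by simp

lemma rep_sub: "is_rep G d r \<Longrightarrow> H \<subseteq> G \<Longrightarrow> id \<in> H \<Longrightarrow> is_rep H d r"
  unfolding is_rep_def by blast

lemma id_esp: "id \<in> even_signed_perms n"
  unfolding esp_mem PP_def using sp_id by (simp add: prod_pos)

lemma rep_B_decomp:
  assumes rep: "is_rep (signed_perms n) d r" and rz: "r (zz n) = e \<cdot>\<^sub>m 1\<^sub>m d"
    and g: "g \<in> signed_perms n"
  shows "r g = e \<cdot>\<^sub>m r (g \<circ> zz n)"
proof -
  have gz: "g \<circ> zz n \<in> signed_perms n" using sp_comp[OF g zz_sp] .
  have "g = (g \<circ> zz n) \<circ> zz n" by (simp add: o_assoc[symmetric] zz_zz)
  then have "r g = r (g \<circ> zz n) * r (zz n)" using rep_hom[OF rep gz zz_sp] by simp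
  also have "\<dots> = e \<cdot>\<^sub>m (r (g \<circ> zz n) * 1\<^sub>m d)" unfolding rz
    by (rule mult_smult_distrib[OF rep_car[OF rep gz] one_carrier_mat])
  also have "\<dots> = e \<cdot>\<^sub>m r (g \<circ> zz n)" using rep_car[OF rep gz] by simp
  finally show ?thesis .
qed

lemma restrict_irr:
  assumes odd: "odd n" and irr: "irreducible_rep (signed_perms n) d r"
  shows "irreducible_rep (even_signed_perms n) d r"
proof -
  have rep: "is_rep (signed_perms n) d r" and d: "d > 0" using irr unfolding irreducible_rep_def by blast+
  obtain e where rz: "r (zz n) = e \<cdot>\<^sub>m 1\<^sub>m d" using schur_z[OF odd irr] by blast
  have repD: "is_rep (even_signed_perms n) d r" using rep_sub[OF rep esp_sub id_esp] .
  have "W = {0\<^sub>v d} \<or> W = carrier_vec d" if W: "inv_subspace (even_signed_perms n) d r W" for W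
  proof -
    have "inv_subspace (signed_perms n) d r W" unfolding inv_subspace_def
    proof (intro conjI ballI allI)
      show "W \<subseteq> carrier_vec d" "0\<^sub>v d \<in> W" using W unfolding inv_subspace_def by blast+
      show "u + v \<in> W" if "u \<in> W" "v \<in> W" for u v using W that unfolding inv_subspace_def by blast
      show "c \<cdot>\<^sub>v v \<in> W" if "v \<in> W" for c v using W that unfolding inv_subspace_def by blast
      fix g v assume g: "g \<in> signed_perms n" and v: "v \<in> W"
      show "r g *\<^sub>v v \<in> W"
      proof (cases "g \<in> even_signed_perms n")
        case True then show ?thesis using W v unfolding inv_subspace_def by blast
      next
        case False
        then have gz: "g \<circ> zz n \<in> even_signed_perms n" using not_esp_comp_zz[OF odd g] by blast
        have vc: "v \<in> carrier_vec d" using W v unfolding inv_subspace_def by blast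
        have "r g *\<^sub>v v = e \<cdot>\<^sub>v (r (g \<circ> zz n) *\<^sub>v v)"
          unfolding rep_B_decomp[OF rep rz g]
          using smult_mat_vec[OF rep_car[OF rep sp_comp[OF g zz_sp]] vc] .
        moreover have "r (g \<circ> zz n) *\<^sub>v v \<in> W" using W v gz unfolding inv_subspace_def by blast
        ultimately show ?thesis using W unfolding inv_subspace_def by auto
      qed
    qed
    then show ?thesis using irr unfolding irreducible_rep_def by blast
  qed
  then show ?thesis using repD d unfolding irreducible_rep_def by blast
qed

definition ext_rep :: "nat \<Rightarrow> complex \<Rightarrow> ((int \<Rightarrow> int) \<Rightarrow> complex mat) \<Rightarrow> (int \<Rightarrow> int) \<Rightarrow> complex mat" where
  "ext_rep n e r = (\<lambda>g. if g \<in> even_signed_perms n then r g else e \<cdot>\<^sub>m r (g \<circ> zz n))"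

lemma ext_irr:
  assumes odd: "odd n" and e: "e * e = 1" and irr: "irreducible_rep (even_signed_perms n) d r"
  shows "irreducible_rep (signed_perms n) d (ext_rep n e r)"
proof -
  let ?D = "even_signed_perms n" and ?B = "signed_perms n" and ?R = "ext_rep n e r"
  have rep: "is_rep ?D d r" and d: "d > 0" using irr unfolding irreducible_rep_def by blast+
  have Rcar: "?R g \<in> carrier_mat d d" if g: "g \<in> ?B" for g
  proof (cases "g \<in> ?D")
    case True then show ?thesis unfolding ext_rep_def using rep_car[OF rep] by simp
  next
    case False
    then have "g \<circ> zz n \<in> ?D" using not_esp_comp_zz[OF odd g] by blast
    then show ?thesis unfolding ext_rep_def using rep_car[OF rep] False by simp
  qed
  have zc: "g \<circ> zz n \<in> ?D" if "g \<in> ?B" "g \<notin> ?D" for g using not_esp_comp_zz[OF odd] that by blast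
  have Rhom: "?R (g \<circ> h) = ?R g * ?R h" if g: "g \<in> ?B" and h: "h \<in> ?B" for g h
  proof (cases "g \<in> ?D")
    case gD: True
    show ?thesis
    proof (cases "h \<in> ?D")
      case hD: True
      then have "g \<circ> h \<in> ?D" using comp_esp_iff[OF g h] gD by blast
      then show ?thesis unfolding ext_rep_def using gD hD rep_hom[OF rep gD hD] by simp
    next
      case hD: False
      then have ghD: "g \<circ> h \<notin> ?D" using comp_esp_iff[OF g h] gD by blast
      have "r (g \<circ> h \<circ> zz n) = r g * r (h \<circ> zz n)"
        using rep_hom[OF rep gD zc[OF h hD]] by (simp add: o_assoc)
      then show ?thesis unfolding ext_rep_def using gD hD ghD
        rep_car[OF rep gD] rep_car[OF rep zc[OF h hD]] by (simp add: mult_smult_distrib)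
    qed
  next
    case gD: False
    show ?thesis
    proof (cases "h \<in> ?D")
      case hD: True
      then have ghD: "g \<circ> h \<notin> ?D" using comp_esp_iff[OF g h] gD by blast
      have "g \<circ> h \<circ> zz n = (g \<circ> zz n) \<circ> h"
        using zz_comm[OF h] by (simp add: o_assoc[symmetric])
      then have "r (g \<circ> h \<circ> zz n) = r (g \<circ> zz n) * r h"
        using rep_hom[OF rep zc[OF g gD] hD] by simp
      then show ?thesis unfolding ext_rep_def using gD hD ghD
        rep_car[OF rep hD] rep_car[OF rep zc[OF g gD]] by (simp add: mult_smult_assoc_mat)
    next
      case hD: False
      then have ghD: "g \<circ> h \<in> ?D" using comp_esp_iff[OF g h] gD by blast
      have zc1: "zz n (h x) = h (zz n x)" for x using fun_cong[OF zz_comm[OF h], of x] by simp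
      have zz2: "zz n (zz n x) = x" for x using fun_cong[OF zz_zz, of n x] by simp
      have "g \<circ> h = (g \<circ> zz n) \<circ> (h \<circ> zz n)"
        by (rule ext) (simp add: zc1 zz2)
      then have "r (g \<circ> h) = r (g \<circ> zz n) * r (h \<circ> zz n)"
        using rep_hom[OF rep zc[OF g gD] zc[OF h hD]] by simp
      then show ?thesis unfolding ext_rep_def using gD hD ghD e
        smult_mult_smult[OF rep_car[OF rep zc[OF g gD]] rep_car[OF rep zc[OF h hD]], of e e]
        by (simp add: one_smult_mat)
    qed
  qed
  have Rid: "?R id = 1\<^sub>m d" unfolding ext_rep_def using id_esp rep_id[OF rep] by simp
  have repB: "is_rep ?B d ?R" unfolding is_rep_def using Rcar Rhom Rid by blast
  have "W = {0\<^sub>v d} \<or> W = carrier_vec d" if W: "inv_subspace ?B d ?R W" for W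
  proof -
    have "inv_subspace ?D d r W" unfolding inv_subspace_def
    proof (intro conjI ballI allI)
      show "W \<subseteq> carrier_vec d" "0\<^sub>v d \<in> W" using W unfolding inv_subspace_def by blast+
      show "u + v \<in> W" if "u \<in> W" "v \<in> W" for u v using W that unfolding inv_subspace_def by blast
      show "c \<cdot>\<^sub>v v \<in> W" if "v \<in> W" for c v using W that unfolding inv_subspace_def by blast
      fix g v assume g: "g \<in> ?D" and v: "v \<in> W"
      have "?R g = r g" unfolding ext_rep_def using g by simp
      then show "r g *\<^sub>v v \<in> W" using W v g esp_sub unfolding inv_subspace_def by force
    qed
    then show ?thesis using irr unfolding irreducible_rep_def by blast
  qed
  then show ?thesis using repB d unfolding irreducible_rep_def by blast
qed


definition chr :: "(int \<Rightarrow> int) set \<Rightarrow> ((int \<Rightarrow> int) \<Rightarrow> complex mat) \<Rightarrow> (int \<Rightarrow> int) \<Rightarrow> complex" where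
  "chr G r = (\<lambda>g. if g \<in> G then mat_trace (r g) else 0)"

lemma irr_chars_alt: "irr_chars G = {chr G r | d r. irreducible_rep G d r}"
  unfolding irr_chars_def chr_def by simp

definition ext_chi :: "nat \<Rightarrow> complex \<Rightarrow> ((int \<Rightarrow> int) \<Rightarrow> complex) \<Rightarrow> (int \<Rightarrow> int) \<Rightarrow> complex" where
  "ext_chi n e x = (\<lambda>g. if g \<in> even_signed_perms n then x g
      else if g \<in> signed_perms n then e * x (g \<circ> zz n) else 0)"

lemma chr_ext:
  assumes odd: "odd n" and irr: "irreducible_rep (even_signed_perms n) d r"
  shows "chr (signed_perms n) (ext_rep n e r) = ext_chi n e (chr (even_signed_perms n) r)"
proof
  fix g
  have rep: "is_rep (even_signed_perms n) d r" using irr unfolding irreducible_rep_def by blast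
  show "chr (signed_perms n) (ext_rep n e r) g = ext_chi n e (chr (even_signed_perms n) r) g"
  proof (cases "g \<in> signed_perms n")
    case False
    then have "g \<notin> even_signed_perms n" using esp_sub by blast
    then show ?thesis using False unfolding chr_def ext_chi_def by simp
  next
    case g: True
    show ?thesis
    proof (cases "g \<in> even_signed_perms n")
      case True then show ?thesis unfolding chr_def ext_chi_def ext_rep_def using g by simp
    next
      case False
      then have gz: "g \<circ> zz n \<in> even_signed_perms n" using not_esp_comp_zz[OF odd g] by blast
      show ?thesis unfolding chr_def ext_chi_def ext_rep_def using g False gz
        tr_smult[OF rep_car[OF rep gz]] by simp
    qed
  qed
qed

lemma chr_restr:
  assumes odd: "odd n" and irr: "irreducible_rep (signed_perms n) d r"
    and rz: "r (zz n) = e \<cdot>\<^sub>m 1\<^sub>m d"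
  shows "chr (signed_perms n) r = ext_chi n e (chr (even_signed_perms n) r)"
proof
  fix g
  have rep: "is_rep (signed_perms n) d r" using irr unfolding irreducible_rep_def by blast
  show "chr (signed_perms n) r g = ext_chi n e (chr (even_signed_perms n) r) g"
  proof (cases "g \<in> signed_perms n")
    case False
    then have "g \<notin> even_signed_perms n" using esp_sub by blast
    then show ?thesis using False unfolding chr_def ext_chi_def by simp
  next
    case g: True
    show ?thesis
    proof (cases "g \<in> even_signed_perms n")
      case True then show ?thesis unfolding chr_def ext_chi_def using g by simp
    next
      case False
      then have gz: "g \<circ> zz n \<in> even_signed_perms n" using not_esp_comp_zz[OF odd g] by blast
      have gzB: "g \<circ> zz n \<in> signed_perms n" using sp_comp[OF g zz_sp] .
      have "mat_trace (r g) = e * mat_trace (r (g \<circ> zz n))"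
        unfolding rep_B_decomp[OF rep rz g] by (rule tr_smult[OF rep_car[OF rep gzB]])
      then show ?thesis unfolding chr_def ext_chi_def using g False gz by simp
    qed
  qed
qed

lemma irr_chars_B:
  assumes odd: "odd n"
  shows "irr_chars (signed_perms n) =
    (\<lambda>(x, e). ext_chi n e x) ` (irr_chars (even_signed_perms n) \<times> {1, -1})"
proof (intro equalityI subsetI)
  fix y assume "y \<in> irr_chars (signed_perms n)"
  then obtain d r where y: "y = chr (signed_perms n) r" and irr: "irreducible_rep (signed_perms n) d r"
    unfolding irr_chars_alt by blast
  obtain e :: complex where e: "e = 1 \<or> e = -1" and rz: "r (zz n) = e \<cdot>\<^sub>m 1\<^sub>m d"
    using schur_z[OF odd irr] by blast
  have "chr (even_signed_perms n) r \<in> irr_chars (even_signed_perms n)"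
    unfolding irr_chars_alt using restrict_irr[OF odd irr] by blast
  moreover have "y = ext_chi n e (chr (even_signed_perms n) r)" using chr_restr[OF odd irr rz] y by simp
  ultimately show "y \<in> (\<lambda>(x, e). ext_chi n e x) ` (irr_chars (even_signed_perms n) \<times> {1, -1})"
    using e by force
next
  fix y assume "y \<in> (\<lambda>(x, e). ext_chi n e x) ` (irr_chars (even_signed_perms n) \<times> {1, -1})"
  then obtain x e where y: "y = ext_chi n e x" and x: "x \<in> irr_chars (even_signed_perms n)"
    and e: "e = 1 \<or> e = (-1 :: complex)" by auto
  obtain d r where xr: "x = chr (even_signed_perms n) r" and irr: "irreducible_rep (even_signed_perms n) d r"
    using x unfolding irr_chars_alt by blast
  have ee: "e * e = 1" using e by auto
  have "y = chr (signed_perms n) (ext_rep n e r)" using chr_ext[OF odd irr] y xr by simp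
  then show "y \<in> irr_chars (signed_perms n)" unfolding irr_chars_alt using ext_irr[OF odd ee irr] by blast
qed

lemma irr_D_vanish: "x \<in> irr_chars G \<Longrightarrow> g \<notin> G \<Longrightarrow> x g = 0"
  unfolding irr_chars_alt chr_def by auto

lemma irr_id: assumes "x \<in> irr_chars G" "id \<in> G" shows "x id \<noteq> 0"
proof -
  obtain d r where x: "x = chr G r" and irr: "irreducible_rep G d r" using assms(1) unfolding irr_chars_alt by blast
  have "r id = 1\<^sub>m d" "d > 0" using irr unfolding irreducible_rep_def is_rep_def by blast+
  then show ?thesis using x assms(2) unfolding chr_def by (simp add: tr_one)
qed

lemma ext_inj:
  assumes odd: "odd n"
  shows "inj_on (\<lambda>(x, e). ext_chi n e x) (irr_chars (even_signed_perms n) \<times> {1, -1})"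
proof (rule inj_onI, clarify)
  fix x e x' e'
  assume x: "x \<in> irr_chars (even_signed_perms n)" and x': "x' \<in> irr_chars (even_signed_perms n)"
    and e: "e \<in> {1, -1::complex}" and e': "e' \<in> {1, -1::complex}"
    and eq: "ext_chi n e x = ext_chi n e' x'"
  have "x g = x' g" for g
  proof (cases "g \<in> even_signed_perms n")
    case True then show ?thesis using fun_cong[OF eq, of g] unfolding ext_chi_def by simp
  next
    case False then show ?thesis using irr_D_vanish[OF x] irr_D_vanish[OF x'] by simp
  qed
  then have xx: "x = x'" by blast
  have "ext_chi n e x (zz n) = e * x id" unfolding ext_chi_def
    using zz_not_esp[OF odd] zz_sp zz_zz by simp
  moreover have "ext_chi n e' x (zz n) = e' * x id" unfolding ext_chi_def
    using zz_not_esp[OF odd] zz_sp zz_zz by simp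
  ultimately have "e * x id = e' * x id" using eq xx by metis
  then have "e = e'" using irr_id[OF x id_esp] by simp
  then show "x = x' \<and> e = e'" using xx by simp
qed

lemma col_D_out: "g \<notin> G \<Longrightarrow> col_sum G g = 0"
  unfolding col_sum_def using irr_D_vanish by (simp add: sum.neutral)

lemma col_B:
  assumes odd: "odd n" and w: "w \<in> signed_perms n"
  shows "col_sum (signed_perms n) w = 2 * col_sum (even_signed_perms n) w"
proof -
  let ?I = "irr_chars (even_signed_perms n)"
  have "col_sum (signed_perms n) w = (\<Sum>y\<in>(\<lambda>(x, e). ext_chi n e x) ` (?I \<times> {1, -1}). y w)"
    unfolding col_sum_def irr_chars_B[OF odd] ..
  also have "\<dots> = (\<Sum>(x, e)\<in>?I \<times> {1, -1}. ext_chi n e x w)"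
    by (subst sum.reindex[OF ext_inj[OF odd]]) (simp add: case_prod_unfold o_def)
  also have "\<dots> = (\<Sum>x\<in>?I. \<Sum>e\<in>{1, -1}. ext_chi n e x w)"
    by (rule sum.cartesian_product[symmetric])
  also have "\<dots> = (\<Sum>x\<in>?I. 2 * x w)"
  proof (rule sum.cong)
    fix x assume x: "x \<in> ?I"
    show "(\<Sum>e\<in>{1, -1}. ext_chi n e x w) = 2 * x w"
    proof (cases "w \<in> even_signed_perms n")
      case True then show ?thesis unfolding ext_chi_def by simp
    next
      case False then show ?thesis unfolding ext_chi_def using w irr_D_vanish[OF x False] by simp
    qed
  qed simp
  also have "\<dots> = 2 * col_sum (even_signed_perms n) w"
    unfolding col_sum_def by (simp add: sum_distrib_left)
  finally show ?thesis .
qed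


lemma sp_bij: "h \<in> signed_perms n \<Longrightarrow> bij h"
  using sp_perm permutes_bij by blast

lemma cl_eq:
  assumes odd: "odd n" and g: "g \<in> signed_perms n"
  shows "{h \<circ> g \<circ> Hilbert_Choice.inv h | h. h \<in> signed_perms n}
       = {h \<circ> g \<circ> Hilbert_Choice.inv h | h. h \<in> even_signed_perms n}"
proof (intro equalityI subsetI)
  fix y assume "y \<in> {h \<circ> g \<circ> Hilbert_Choice.inv h | h. h \<in> signed_perms n}"
  then obtain h where h: "h \<in> signed_perms n" and y: "y = h \<circ> g \<circ> Hilbert_Choice.inv h" by blast
  show "y \<in> {h \<circ> g \<circ> Hilbert_Choice.inv h | h. h \<in> even_signed_perms n}"
  proof (cases "h \<in> even_signed_perms n")
    case True then show ?thesis using y by blast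
  next
    case False
    then have hz: "h \<circ> zz n \<in> even_signed_perms n" using not_esp_comp_zz[OF odd h] by blast
    have "Hilbert_Choice.inv (h \<circ> zz n) = Hilbert_Choice.inv (zz n) \<circ> Hilbert_Choice.inv h"
      by (rule o_inv_distrib[OF sp_bij[OF h] sp_bij[OF zz_sp]])
    then have iv: "Hilbert_Choice.inv (h \<circ> zz n) = zz n \<circ> Hilbert_Choice.inv h" by (simp add: inv_zz)
    have zc1: "zz n (g x) = g (zz n x)" for x using fun_cong[OF zz_comm[OF g], of x] by simp
    have zz2: "zz n (zz n x) = x" for x using fun_cong[OF zz_zz, of n x] by simp
    have "(h \<circ> zz n) \<circ> g \<circ> Hilbert_Choice.inv (h \<circ> zz n) = y"
      unfolding iv y by (rule ext) (simp add: zc1 zz2)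
    then show ?thesis using hz by blast
  qed
qed (use esp_sub in blast)

lemma conj_esp:
  assumes h: "h \<in> signed_perms n" and g: "g \<in> signed_perms n"
  shows "h \<circ> g \<circ> Hilbert_Choice.inv h \<in> even_signed_perms n \<longleftrightarrow> g \<in> even_signed_perms n"
proof -
  have ih: "Hilbert_Choice.inv h \<in> signed_perms n" using sp_inv[OF h] .
  have "h \<circ> Hilbert_Choice.inv h = id" using surj_iff[of h] bij_is_surj[OF sp_bij[OF h]] by blast
  then have "(h \<in> even_signed_perms n \<longleftrightarrow> Hilbert_Choice.inv h \<in> even_signed_perms n)"
    using comp_esp_iff[OF h ih] id_esp by simp
  then show ?thesis using comp_esp_iff[OF sp_comp[OF h g] ih] comp_esp_iff[OF h g] by blast
qed

lemma finite_sp: "finite (signed_perms n)"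
proof -
  have "signed_perms n \<subseteq> {p. p permutes SS n}" using sp_perm by blast
  moreover have "finite {p. p permutes SS n}" by (rule finite_permutations) simp
  ultimately show ?thesis by (rule finite_subset)
qed

lemma table_B:
  assumes odd: "odd n"
  shows "table_sum (signed_perms n) = 2 * table_sum (even_signed_perms n)"
proof -
  let ?B = "signed_perms n" and ?D = "even_signed_perms n"
  let ?f = "\<lambda>C. col_sum ?D (SOME g. g \<in> C)"
  have ccB_sub: "C \<subseteq> ?B \<and> C \<noteq> {}" if CB: "C \<in> conj_classes ?B" for C
  proof -
    obtain g where g: "g \<in> ?B" and C: "C = {h \<circ> g \<circ> Hilbert_Choice.inv h | h. h \<in> ?B}"
      using CB unfolding conj_classes_def by blast
    have "id \<circ> g \<circ> Hilbert_Choice.inv id \<in> C" unfolding C using sp_id by blast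
    moreover have "C \<subseteq> ?B" unfolding C using sp_comp sp_inv g by blast
    ultimately show ?thesis by auto
  qed
  have fin: "finite (conj_classes ?B)"
  proof (rule finite_subset)
    show "conj_classes ?B \<subseteq> Pow ?B" using ccB_sub by blast
  qed (use finite_sp in simp)
  have "table_sum ?B = (\<Sum>C\<in>conj_classes ?B. 2 * ?f C)"
    unfolding table_sum_def
  proof (rule sum.cong)
    fix C assume "C \<in> conj_classes ?B"
    then have "(SOME g. g \<in> C) \<in> ?B" using ccB_sub by (metis some_in_eq subsetD)
    then show "col_sum ?B (SOME g. g \<in> C) = 2 * ?f C" by (rule col_B[OF odd])
  qed simp
  also have "\<dots> = 2 * (\<Sum>C\<in>conj_classes ?B. ?f C)" by (simp add: sum_distrib_left)
  also have "(\<Sum>C\<in>conj_classes ?B. ?f C) = (\<Sum>C\<in>conj_classes ?D. ?f C)"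
  proof (rule sum.mono_neutral_right[OF fin])
    show "conj_classes ?D \<subseteq> conj_classes ?B"
    proof
      fix C assume "C \<in> conj_classes ?D"
      then obtain g where g: "g \<in> ?D" and C: "C = {h \<circ> g \<circ> Hilbert_Choice.inv h | h. h \<in> ?D}"
        unfolding conj_classes_def by blast
      have gB: "g \<in> ?B" using g esp_sub by blast
      show "C \<in> conj_classes ?B" unfolding conj_classes_def using cl_eq[OF odd gB] C gB by blast
    qed
    show "\<forall>C\<in>conj_classes ?B - conj_classes ?D. ?f C = 0"
    proof
      fix C assume CC: "C \<in> conj_classes ?B - conj_classes ?D"
      then obtain g where g: "g \<in> ?B" and C: "C = {h \<circ> g \<circ> Hilbert_Choice.inv h | h. h \<in> ?B}"
        unfolding conj_classes_def by blast
      have gD: "g \<notin> ?D"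
      proof
        assume "g \<in> ?D"
        then have "C \<in> conj_classes ?D" unfolding conj_classes_def using cl_eq[OF odd g] C by blast
        then show False using CC by blast
      qed
      have "(SOME g. g \<in> C) \<in> C" using ccB_sub CC by (metis DiffD1 some_in_eq)
      then obtain h where h: "h \<in> ?B" and s: "(SOME g. g \<in> C) = h \<circ> g \<circ> Hilbert_Choice.inv h"
        unfolding C by blast
      have "(SOME g. g \<in> C) \<notin> ?D" unfolding s using conj_esp[OF h g] gD by blast
      then show "?f C = 0" by (rule col_D_out)
    qed
  qed
  finally show ?thesis unfolding table_sum_def .
qed


theorem proposition5p12:
  fixes n :: nat
  assumes "odd n"
  shows "(\<forall>w\<in>signed_perms n.
            col_sum (signed_perms n) w =
              (if even (num_neg_cycles n w) then 2 * col_sum (even_signed_perms n) w else 0))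
         \<and> table_sum (signed_perms n) = 2 * table_sum (even_signed_perms n)"
proof
  show "\<forall>w\<in>signed_perms n.
            col_sum (signed_perms n) w =
              (if even (num_neg_cycles n w) then 2 * col_sum (even_signed_perms n) w else 0)"
  proof
    fix w assume w: "w \<in> signed_perms n"
    show "col_sum (signed_perms n) w =
              (if even (num_neg_cycles n w) then 2 * col_sum (even_signed_perms n) w else 0)"
    proof (cases "even (num_neg_cycles n w)")
      case True then show ?thesis using col_B[OF assms w] by simp
    next
      case False
      then have "w \<notin> even_signed_perms n" using neg_par[OF w] esp_mem by blast
      then have "col_sum (even_signed_perms n) w = 0" by (rule col_D_out)
      then show ?thesis using col_B[OF assms w] False by simp
    qed
  qed
  show "table_sum (signed_perms n) = 2 * table_sum (even_signed_perms n)"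
    by (rule table_B[OF assms])
qed

end
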